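(* Let $n$ be a non-negative integer. Then \[ \zeta(2n+3)=\frac{1}{2n+2}\sum_{j=0}^{n}(3j+5)\sum_{k=1}^{\infty}\frac{(-1)^{k-1}}{k^{2j+3}\binom{2k}{k}}\sum_{r=0}^{n-j}(-4)^r e_r^{(2)}(k)\,g_{n-j-r}^{(2)}(k). \]
   Context: For positive integers $r,s,k$: $e_r^{(s)}(k)$ is the coefficient of $t^r$ in $\prod_{j=1}^{k-1}(1+j^{-s}t)$ (equivalently $\sum_{1\le j_1<\cdots<j_r\le k-1}(j_1\cdots j_r)^{-s}$, with $e_0^{(s)}(k)=1$), and $g_r^{(s)}(k)$ is the coefficient of $t^r$ in $\prod_{j=1}^{k-1}(1-j^{-s}t)^{-2}$. *)

theory Defs
  imports "HOL-Analysis.Analysis" "HOL-Computational_Algebra.Formal_Power_Series"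
begin

text \<open>Riemann zeta at a positive integer s (meant for s \<ge> 2): sum over k \<ge> 1 of k^(-s).\<close>
definition zeta_nat :: "nat \<Rightarrow> real" where
  "zeta_nat s = (\<Sum>k. 1 / (real (Suc k)) ^ s)"

definition e_coeff :: "nat \<Rightarrow> nat \<Rightarrow> nat \<Rightarrow> real" where
  "e_coeff s k r = fps_nth (\<Prod>j\<in>{1..<k}. 1 + fps_const (1 / real j ^ s) * fps_X) r"

definition g_coeff :: "nat \<Rightarrow> nat \<Rightarrow> nat \<Rightarrow> real" where
  "g_coeff s k r = fps_nth (\<Prod>j\<in>{1..<k}. inverse ((1 - fps_const (1 / real j ^ s) * fps_X) ^ 2)) r"

end

theory Submission
  imports Defs
begin


definition Qf :: "nat \<Rightarrow> real fps" where "Qf j = (of_nat j ^ 2 - fps_X)^2"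
definition iQ :: "nat \<Rightarrow> real fps" where "iQ j = inverse (Qf j)"
definition cf :: "nat \<Rightarrow> real fps" where "cf i = of_nat i ^ 2 * (of_nat i ^ 2 - 4 * fps_X)"
definition CP :: "nat \<Rightarrow> real fps" where "CP k = (\<Prod>i\<in>{1..k}. cf i)"
definition pre :: "nat \<Rightarrow> real" where "pre k = (-1)^k / (2 * real (2*k choose k))"
definition Lam :: "nat \<Rightarrow> nat \<Rightarrow> real fps" where
  "Lam k m = 2* of_nat m ^ 2 - 6* of_nat (k+1)* of_nat m + 5* of_nat (k+1) ^ 2 - 2*fps_X"
definition Gs :: "nat \<Rightarrow> nat \<Rightarrow> real fps" where
  "Gs i k = fps_const (pre k) * CP k * of_nat (2*i+k+2) * (\<Prod>j\<in>{i+1..i+k+1}. iQ j)"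
definition Fs :: "nat \<Rightarrow> nat \<Rightarrow> real fps" where
  "Fs i k = fps_const (pre k / (2*(2*real k+1))) * CP k * Lam k (i+k+2) * (\<Prod>j\<in>{i+1..i+k+1}. iQ j)"

lemma Qf_nth0: "fps_nth (Qf j) 0 = real j ^ 4"
  by (simp add: Qf_def fps_nth_power_0 power_mult[symmetric])

lemma iQ_Qf: "j > 0 \<Longrightarrow> Qf j * iQ j = 1"
  unfolding iQ_def by (rule inverse_mult_eq_1') (simp add: Qf_nth0)

lemma central_binom_Suc:
  "real (2*Suc k choose Suc k) * (real k + 1) = 2 * (2 * real k + 1) * real (2*k choose k)"
proof -
  define x where "x = (2*k+1 choose k)"
  define y where "y = (2*k choose k)"
  define z where "z = (2*Suc k choose Suc k)"
  have e: "2*Suc k = Suc (2*k+1)" by simp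
  have a: "Suc (2*k+1) * x = z * Suc k"
    unfolding x_def z_def e by (rule Suc_times_binomial_eq)
  have b: "Suc (2*k) * y = (Suc (2*k) choose Suc k) * Suc k"
    unfolding y_def by (rule Suc_times_binomial_eq)
  have c: "(Suc (2*k) choose Suc k) = x"
    using binomial_symmetric[of "Suc k" "Suc (2*k)"] unfolding x_def by simp
  have a': "(2*real k+2) * real x = real z * (real k + 1)"
    using arg_cong[OF a, of real] by (simp add: algebra_simps)
  have b': "(2*real k+1) * real y = real x * (real k + 1)"
    using arg_cong[OF b, of real] unfolding c by (simp add: algebra_simps)
  have "real z * (real k + 1) * (real k + 1) = (2*real k+2) * real x * (real k + 1)"
    using a' by simp
  also have "\<dots> = 2 * (real k + 1) * (real x * (real k + 1))" by (simp add: algebra_simps)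
  also have "\<dots> = 2 * (real k + 1) * ((2*real k+1) * real y)" using b' by simp
  finally have "real z * (real k + 1) * (real k + 1) = 2 * (2 * real k + 1) * real y * (real k + 1)"
    by (simp add: algebra_simps)
  hence "real z * (real k + 1) = 2 * (2 * real k + 1) * real y"
    by (metis mult_right_cancel of_nat_Suc of_nat_eq_0_iff add.commute nat.distinct(1))
  thus ?thesis unfolding z_def y_def .
qed

lemma pre_Suc: "pre (Suc k) = - pre k * real (Suc k) / (2 * (2 * real k + 1))"
proof -
  have pos: "real (2*k choose k) > 0" by simp
  have pos2: "real (2*Suc k choose Suc k) > 0"
    using zero_less_binomial[of "Suc k" "2*Suc k"] by (simp del: binomial_Suc_Suc)
  have ne: "2 * real k + 1 \<noteq> 0" by (simp add: add_nonneg_eq_0_iff)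
  have "pre (Suc k) = (-1)^Suc k / (2 * real (2*Suc k choose Suc k))"
    unfolding pre_def by simp
  also have "\<dots> = (-1)^Suc k * (real k + 1) / (2 * (real (2*Suc k choose Suc k) * (real k + 1)))"
    by (simp del: binomial_Suc_Suc)
  also have "\<dots> = - pre k * real (Suc k) / (2 * (2 * real k + 1))"
    unfolding central_binom_Suc pre_def using pos ne
    apply (simp add: field_simps)
    apply (simp add: add_divide_distrib diff_divide_distrib)
    done
  finally show ?thesis .
qed

lemma polyid:
  fixes X I K :: "'a::idom"
  shows "2*(2*K+1)*(2*I+K+4)*((I+1)^2 - X)^2 + (K+1)*((K+1)^2*((K+1)^2 - 4*X))*(2*I+K+3)
    = (2*(I+K+2)^2 - 6*(K+1)*(I+K+2) + 5*(K+1)^2 - 2*X) * ((I+K+2)^2 - X)^2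
      - (2*(I+K+3)^2 - 6*(K+1)*(I+K+3) + 5*(K+1)^2 - 2*X) * ((I+1)^2 - X)^2"
  by algebra



lemma WZ: "Gs (Suc i) k - Gs i (Suc k) = Fs i k - Fs (Suc i) k"
proof -
  define P where "P = (\<Prod>j\<in>{i+2..i+k+1}. iQ j)"
  define H where "H = fps_const (1 / (2*(2*real k+1)))"
  have p1: "(\<Prod>j\<in>{Suc i+1..Suc i+k+1}. iQ j) = P * iQ (i+k+2)"
  proof -
    have "{Suc i+1..Suc i+k+1} = {i+2..Suc (i+k+1)}" by auto
    hence "(\<Prod>j\<in>{Suc i+1..Suc i+k+1}. iQ j) = iQ (Suc (i+k+1)) * P"
      unfolding P_def by (simp add: prod.cl_ivl_Suc)
    thus ?thesis by (simp add: mult.commute)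
  qed
  have p3: "(\<Prod>j\<in>{i+1..i+k+1}. iQ j) = iQ (i+1) * P"
    unfolding P_def by (subst prod.atLeast_Suc_atMost) auto
  have p2: "(\<Prod>j\<in>{i+1..i+Suc k+1}. iQ j) = iQ (i+1) * (P * iQ (i+k+2))"
  proof -
    have "(\<Prod>j\<in>{i+1..i+Suc k+1}. iQ j) = iQ (i+1) * (\<Prod>j\<in>{Suc i+1..Suc i+k+1}. iQ j)"
      by (subst prod.atLeast_Suc_atMost) auto
    thus ?thesis by (simp only: p1)
  qed
  have cp: "CP (Suc k) = CP k * cf (Suc k)"
    unfolding CP_def by (simp add: prod.cl_ivl_Suc mult.commute)
  have h1: "Qf (i+1) * iQ (i+1) = 1" by (rule iQ_Qf) simp
  have h2: "Qf (i+k+2) * iQ (i+k+2) = 1" by (rule iQ_Qf) simp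
  have ne: "2*(2*real k+1) \<noteq> 0" by (simp add: add_nonneg_eq_0_iff)
  have c4: "(4 * of_nat k + 2 :: real fps) = fps_const (4*real k+2)"
    by (simp add: fps_eq_iff fps_numeral_nth)
  have h3: "(4 * of_nat k + 2) * H = 1"
    unfolding c4 H_def using ne by (simp add: field_simps)
  have e1: "fps_const (pre (Suc k)) = - fps_const (pre k) * (of_nat k + 1) * H"
    unfolding pre_Suc H_def by (simp add: fps_of_nat[symmetric] field_simps)
  have e2: "fps_const (pre k / (2*(2*real k+1))) = fps_const (pre k) * H"
    unfolding H_def by simp
  have pid: "(2::real fps)*(2* of_nat k+1)*(2* of_nat i+ of_nat k+4)*((of_nat i+1)^2 - fps_X)^2
      + (of_nat k+1)*((of_nat k+1)^2*((of_nat k+1)^2 - 4*fps_X))*(2* of_nat i+ of_nat k+3)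
    = (2*(of_nat i+ of_nat k+2)^2 - 6*(of_nat k+1)*(of_nat i+ of_nat k+2) + 5*(of_nat k+1)^2 - 2*fps_X)
        * ((of_nat i+ of_nat k+2)^2 - fps_X)^2
      - (2*(of_nat i+ of_nat k+3)^2 - 6*(of_nat k+1)*(of_nat i+ of_nat k+3) + 5*(of_nat k+1)^2 - 2*fps_X)
        * ((of_nat i+1)^2 - fps_X)^2"
    by (rule polyid)
  show ?thesis
    unfolding Gs_def Fs_def p1 p2 p3 cp e1 e2
    using h1 h2 h3 pid
    unfolding Qf_def cf_def Lam_def
    by (simp only: of_nat_add of_nat_mult of_nat_numeral of_nat_1 of_nat_Suc) algebra
qed


lemma diag: "Gs 0 k + Fs 0 k = fps_const (pre k / (2*(2*real k+1))) * CP k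
    * (5 * of_nat (k+1) ^ 2 - 2 * fps_X) * (\<Prod>j\<in>{1..k+1}. iQ j)"
proof -
  define H where "H = fps_const (1 / (2*(2*real k+1)))"
  have ne: "2*(2*real k+1) \<noteq> 0" by (simp add: add_nonneg_eq_0_iff)
  have c4: "(4 * of_nat k + 2 :: real fps) = fps_const (4*real k+2)"
    by (simp add: fps_eq_iff fps_numeral_nth)
  have h3: "(4 * of_nat k + 2) * H = 1"
    unfolding c4 H_def using ne by (simp add: field_simps)
  have e2: "fps_const (pre k / (2*(2*real k+1))) = fps_const (pre k) * H"
    unfolding H_def by simp
  show ?thesis
    unfolding Gs_def Fs_def e2 Lam_def using h3
    by (simp only: of_nat_add of_nat_mult of_nat_numeral of_nat_1 of_nat_Suc add_0 mult_0_right) algebra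
qed

definition u :: "real \<Rightarrow> real fps" where "u c = 1 - fps_const c * fps_X"

lemma u_nth0 [simp]: "fps_nth (u c) 0 = 1"
  by (simp add: u_def)

lemma inv_u: "inverse (u c) = Abs_fps (\<lambda>n. c ^ n)"
proof (rule fps_inverse_unique)
  show "u c * Abs_fps (\<lambda>n. c ^ n) = 1"
  proof (rule fps_ext)
    fix n
    show "fps_nth (u c * Abs_fps (\<lambda>n. c ^ n)) n = fps_nth 1 n"
    proof (cases n)
      case 0 thus ?thesis by (simp add: u_def)
    next
      case (Suc m)
      have "u c * Abs_fps (\<lambda>n. c ^ n) = Abs_fps (\<lambda>n. c ^ n) - fps_const c * (fps_X * Abs_fps (\<lambda>n. c ^ n))"
        by (simp add: u_def algebra_simps)
      thus ?thesis using Suc by simp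
    qed
  qed
qed

lemma inv_u2_nth: "fps_nth (inverse ((u c)^2)) n = real (n+1) * c ^ n"
proof -
  have "inverse ((u c)^2) = inverse (u c) * inverse (u c)"
    by (simp add: fps_inverse_mult power2_eq_square)
  hence "fps_nth (inverse ((u c)^2)) n = (\<Sum>i=0..n. c^i * c^(n-i))"
    by (simp add: inv_u fps_mult_nth)
  also have "\<dots> = (\<Sum>i=0..n. c^n)"
    by (rule sum.cong) (auto simp: power_add[symmetric])
  finally show ?thesis by simp
qed


lemma fps_const_prod: "(\<Prod>j\<in>S. fps_const (f j)) = fps_const (\<Prod>j\<in>S. f j)"
  by (induction S rule: infinite_finite_induct) simp_all

lemma ofnat_sq: "(of_nat j ^ 2 :: real fps) = fps_const (real j ^ 2)"
  by (simp flip: fps_of_nat)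

lemma lin_u: "j > 0 \<Longrightarrow> (of_nat j ^ 2 - fps_X :: real fps) = fps_const (real j ^ 2) * u (1/real j^2)"
  unfolding ofnat_sq u_def by (simp add: algebra_simps)

lemma Qf_u: "j > 0 \<Longrightarrow> Qf j = fps_const (real j ^ 4) * (u (1/real j^2))^2"
  unfolding Qf_def using lin_u[of j] by (simp add: power_mult_distrib power_mult[symmetric])

lemma iQ_u: "j > 0 \<Longrightarrow> iQ j = fps_const (1/real j ^ 4) * inverse ((u (1/real j^2))^2)"
  unfolding iQ_def Qf_u by (simp add: fps_inverse_mult fps_const_inverse field_simps)

lemma cf_u: "i > 0 \<Longrightarrow> cf i = fps_const (real i ^ 4) * u (4/real i^2)"
proof -
  assume i: "i > 0"
  have "(of_nat i ^ 2 - 4 * fps_X :: real fps) = fps_const (real i ^ 2) * u (4/real i^2)"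
    unfolding ofnat_sq u_def using i by (simp add: algebra_simps fps_const_mult[symmetric] del: fps_const_mult)
  thus ?thesis unfolding cf_def ofnat_sq by (simp add: power_mult[symmetric])
qed

definition iU :: "nat \<Rightarrow> real fps" where "iU j = inverse ((u (1/real j^2))^2)"

lemma prod_iQ: "0 \<notin> S \<Longrightarrow> (\<Prod>j\<in>S. iQ j) = fps_const (\<Prod>j\<in>S. 1/real j^4) * (\<Prod>j\<in>S. iU j)"
proof -
  assume "0 \<notin> S"
  hence "(\<Prod>j\<in>S. iQ j) = (\<Prod>j\<in>S. fps_const (1/real j ^ 4) * iU j)"
    by (intro prod.cong refl) (metis iQ_u iU_def gr0I)
  thus ?thesis by (simp add: prod.distrib fps_const_prod)
qed

definition VP :: "nat \<Rightarrow> real fps" where "VP k = (\<Prod>i\<in>{1..k}. u (4/real i^2))"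

lemma CP_VP: "CP k = fps_const (\<Prod>i\<in>{1..k}. real i^4) * VP k"
proof -
  have "CP k = (\<Prod>i\<in>{1..k}. fps_const (real i ^ 4) * u (4/real i^2))"
    unfolding CP_def by (intro prod.cong) (auto simp: cf_u)
  thus ?thesis by (simp add: prod.distrib fps_const_prod VP_def)
qed


definition EP :: "nat \<Rightarrow> real fps" where
  "EP k = (\<Prod>i\<in>{1..<Suc k}. 1 + fps_const (1 / real i ^ 2) * fps_X) oo (fps_const (-4) * fps_X)"
definition GP :: "nat \<Rightarrow> real fps" where
  "GP k = (\<Prod>j\<in>{1..<Suc k}. inverse ((1 - fps_const (1 / real j ^ 2) * fps_X) ^ 2))"
definition WK :: "nat \<Rightarrow> real fps" where
  "WK k = Abs_fps (\<lambda>j. (3 * real j + 5) / real (Suc k) ^ (2*j))"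
definition c0 :: "nat \<Rightarrow> real" where
  "c0 k = (-1)^k / (real (Suc k) ^ 3 * real (2 * Suc k choose Suc k))"

lemma comp_lin: "fps_nth L 0 = 0 \<Longrightarrow> (1 + fps_const a * fps_X) oo L = 1 + fps_const a * (L::real fps)"
  by (simp only: fps_compose_add_distrib fps_compose_mult_distrib fps_compose_1
      fps_const_compose fps_X_fps_compose_startby0)

lemma EP_VP: "EP k = VP k"
proof -
  have z: "fps_nth (fps_const (-4) * fps_X :: real fps) 0 = 0" by simp
  have "EP k = (\<Prod>i\<in>{1..k}. (1 + fps_const (1 / real i ^ 2) * fps_X) oo (fps_const (-4) * fps_X))"
    unfolding EP_def atLeastLessThanSuc_atLeastAtMost by (rule fps_compose_prod_distrib[OF z])
  also have "\<dots> = (\<Prod>i\<in>{1..k}. u (4 / real i ^ 2))"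
  proof (intro prod.cong refl)
    fix i
    show "(1 + fps_const (1 / real i ^ 2) * fps_X) oo (fps_const (-4) * fps_X) = u (4 / real i ^ 2)"
      unfolding comp_lin[OF z] u_def
      by (simp add: algebra_simps fps_const_mult[symmetric] del: fps_const_mult)
  qed
  finally show ?thesis unfolding VP_def .
qed

lemma GP_iU: "GP k = (\<Prod>j\<in>{1..k}. iU j)"
  unfolding GP_def iU_def u_def atLeastLessThanSuc_atLeastAtMost ..

lemma WK_eq: "WK k = 3 * inverse ((u (1/real (Suc k)^2))^2) + 2 * inverse (u (1/real (Suc k)^2))"
proof (rule fps_ext)
  fix n
  have "(1/real (Suc k)^2)^n = 1 / real (Suc k)^(2*n)"
    by (simp add: power_mult power_one_over)
  thus "fps_nth (WK k) n = fps_nth (3 * inverse ((u (1/real (Suc k)^2))^2) + 2 * inverse (u (1/real (Suc k)^2))) n"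
    unfolding WK_def by (simp add: inv_u inv_u2_nth fps_numeral_nth field_simps)
qed

lemma five_iU: "(5 - fps_const (2/real (Suc k)^2) * fps_X) * iU (Suc k) = WK k"
proof -
  define v where "v = u (1/real (Suc k)^2)"
  have 1: "v * inverse v = 1" unfolding v_def by (rule inverse_mult_eq_1') simp
  have 2: "iU (Suc k) = inverse v * inverse v"
    unfolding iU_def v_def by (simp add: fps_inverse_mult power2_eq_square)
  have 3: "5 - fps_const (2/real (Suc k)^2) * fps_X = 3 + 2 * v"
    unfolding v_def u_def by (simp add: algebra_simps fps_const_mult[symmetric] del: fps_const_mult)
  have 4: "WK k = 3 * (inverse v * inverse v) + 2 * inverse v"
    unfolding WK_eq v_def by (simp add: fps_inverse_mult power2_eq_square)
  show ?thesis unfolding 2 3 4 using 1 by algebra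
qed


lemma scal: "pre k / (2*(2*real k+1)) * (\<Prod>i\<in>{1..k}. real i^4) * real (Suc k) ^ 2
     * (\<Prod>j\<in>{1..k+1}. 1/real j^4) = c0 k / 2"
proof -
  have p1: "(\<Prod>j\<in>{1..k+1}. 1/real j^4) = (\<Prod>j\<in>{1..k}. 1/real j^4) * (1 / real (Suc k)^4)"
    by (simp add: prod.cl_ivl_Suc del: of_nat_Suc)
  have p2: "(\<Prod>i\<in>{1..k}. real i^4) * (\<Prod>j\<in>{1..k}. 1/real j^4) = 1"
    by (simp add: prod.distrib[symmetric])
  have cb: "real (2*Suc k choose Suc k) * (real k + 1) = 2 * (2 * real k + 1) * real (2*k choose k)"
    by (rule central_binom_Suc)
  have pos: "real (2*k choose k) > 0" by simp
  have ne: "2 * real k + 1 \<noteq> 0" by (simp add: add_nonneg_eq_0_iff)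
  have "pre k / (2*(2*real k+1)) * (\<Prod>i\<in>{1..k}. real i^4) * real (Suc k) ^ 2
     * (\<Prod>j\<in>{1..k+1}. 1/real j^4)
     = pre k / (2*(2*real k+1)) * real (Suc k) ^ 2 / real (Suc k)^4
       * ((\<Prod>i\<in>{1..k}. real i^4) * (\<Prod>j\<in>{1..k}. 1/real j^4))"
    unfolding p1 by (simp add: field_simps)
  also have "\<dots> = pre k / (2*(2*real k+1) * real (Suc k) ^ 2)"
  proof -
    have r: "real (Suc k) ^ 2 / real (Suc k) ^ 4 = 1 / real (Suc k) ^ 2"
      by (simp add: divide_simps eval_nat_numeral del: of_nat_Suc)
    show ?thesis unfolding p2 mult_1_right
      by (simp only: times_divide_eq_right[symmetric] mult.assoc r) simp
  qed
  also have "\<dots> = c0 k / 2"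
  proof -
    define B where "B = real (2*Suc k choose Suc k)"
    define C where "C = real (2*k choose k)"
    define r where "r = real (Suc k)"
    have rp: "r > 0" unfolding r_def by simp
    have Bp: "B > 0" unfolding B_def using zero_less_binomial[of "Suc k" "2*Suc k"]
      by (simp del: binomial_Suc_Suc)
    have cb': "B * r = 2 * (2 * real k + 1) * C" unfolding B_def C_def r_def using cb
      by (simp only: of_nat_Suc add.commute)
    have "c0 k / 2 = (-1)^k / (2 * r^2 * (B * r))"
      unfolding c0_def B_def[symmetric] r_def[symmetric] using rp Bp
      by (simp add: field_simps power2_eq_square power3_eq_cube)
    also have "\<dots> = (-1)^k / (2 * r^2 * (2 * (2 * real k + 1) * C))" unfolding cb' ..
    also have "\<dots> = pre k / (2*(2*real k+1) * r ^ 2)"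
      unfolding pre_def C_def[symmetric] by (simp add: field_simps)
    finally show ?thesis unfolding r_def by simp
  qed
  finally show ?thesis .
qed

lemma diag_link: "Gs 0 k + Fs 0 k = fps_const (c0 k / 2) * (WK k * (EP k * GP k))"
proof -
  have s0: "(\<Prod>j\<in>{1..k+1}. iQ j) = fps_const (\<Prod>j\<in>{1..k+1}. 1/real j^4) * (\<Prod>j\<in>{1..k+1}. iU j)"
    by (rule prod_iQ) simp
  have s1: "(\<Prod>j\<in>{1..k+1}. iQ j) = fps_const (\<Prod>j\<in>{1..k+1}. 1/real j^4) * (GP k * iU (Suc k))"
    unfolding s0 GP_iU by (simp only: Suc_eq_plus1[symmetric] prod.cl_ivl_Suc) simp
  have s2: "(5 * of_nat (k+1) ^ 2 - 2 * fps_X :: real fps)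
      = fps_const (real (Suc k) ^ 2) * (5 - fps_const (2/real (Suc k)^2) * fps_X)"
  proof -
    have r: "real (Suc k)^2 * (2 / real (Suc k)^2) = 2" by (simp del: of_nat_Suc)
    have "(of_nat (k+1) ^ 2 :: real fps) = fps_const (real (Suc k) ^ 2)"
      using ofnat_sq[of "Suc k"] by simp
    thus ?thesis
      by (simp add: numeral_fps_const algebra_simps fps_const_mult[symmetric] r del: fps_const_mult of_nat_Suc)
  qed
  have "Gs 0 k + Fs 0 k = fps_const (pre k / (2*(2*real k+1))) * fps_const (\<Prod>i\<in>{1..k}. real i^4)
      * fps_const (real (Suc k) ^ 2) * fps_const (\<Prod>j\<in>{1..k+1}. 1/real j^4)
      * (VP k * GP k * ((5 - fps_const (2/real (Suc k)^2) * fps_X) * iU (Suc k)))"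
    unfolding diag CP_VP s1 s2 by (simp only: ac_simps)
  also have "\<dots> = fps_const (c0 k / 2) * (VP k * GP k * WK k)"
    unfolding five_iU scal[symmetric] by (simp only: fps_const_mult[symmetric] mult.assoc)
  finally show ?thesis unfolding EP_VP by (simp only: ac_simps)
qed


section \<open>Coefficient norms\<close>

definition nr :: "nat \<Rightarrow> real fps \<Rightarrow> real" where
  "nr n f = (\<Sum>i\<le>n. \<bar>fps_nth f i\<bar>)"

lemma nr_nonneg: "nr n f \<ge> 0"
  unfolding nr_def by (rule sum_nonneg) simp

lemma nth_le_nr: "\<bar>fps_nth f n\<bar> \<le> nr n f"
  unfolding nr_def by (rule member_le_sum) auto

lemma nr_mult: "nr n (f * g) \<le> nr n f * nr n g"
proof -
  have "nr n (f * g) \<le> (\<Sum>k\<le>n. \<Sum>i\<le>k. \<bar>fps_nth f i\<bar> * \<bar>fps_nth g (k - i)\<bar>)"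
    unfolding nr_def fps_mult_nth
    by (intro sum_mono order.trans[OF sum_abs]) (auto simp: abs_mult atLeast0AtMost)
  also have "\<dots> = (\<Sum>(i,j)\<in>{(i,j). i+j \<le> n}. \<bar>fps_nth f i\<bar> * \<bar>fps_nth g j\<bar>)"
    by (rule sum.triangle_reindex_eq[symmetric])
  also have "\<dots> \<le> (\<Sum>(i,j)\<in>{..n}\<times>{..n}. \<bar>fps_nth f i\<bar> * \<bar>fps_nth g j\<bar>)"
    by (rule sum_mono2) auto
  also have "\<dots> = nr n f * nr n g"
    unfolding nr_def sum_product sum.cartesian_product ..
  finally show ?thesis .
qed

lemma nr_one [simp]: "nr n 1 = 1"
  unfolding nr_def by (induction n) auto

lemma nr_const: "nr n (fps_const c) = \<bar>c\<bar>"
  unfolding nr_def by (induction n) auto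

lemma nr_const_mult: "nr n (fps_const c * f) = \<bar>c\<bar> * nr n f"
  unfolding nr_def by (simp add: abs_mult sum_distrib_left)

lemma nr_prod: "nr n (\<Prod>j\<in>S. f j) \<le> (\<Prod>j\<in>S. nr n (f j))"
proof (induction S rule: infinite_finite_induct)
  case (insert x F)
  have "nr n (\<Prod>j\<in>insert x F. f j) = nr n (f x * (\<Prod>j\<in>F. f j))"
    using insert by simp
  also have "\<dots> \<le> nr n (f x) * nr n (\<Prod>j\<in>F. f j)" by (rule nr_mult)
  also have "\<dots> \<le> nr n (f x) * (\<Prod>j\<in>F. nr n (f j))"
    by (rule mult_left_mono[OF insert.IH nr_nonneg])
  finally show ?case using insert by simp
qed simp_all

lemma nr_lin: "nr n (fps_const a + fps_const b * fps_X) \<le> \<bar>a\<bar> + \<bar>b\<bar>"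
  unfolding nr_def
proof (induction n)
  case (Suc n)
  thus ?case by (cases n) auto
qed simp

lemma nr_u: "nr n (u c) \<le> 1 + \<bar>c\<bar>"
proof -
  have "u c = fps_const 1 + fps_const (-c) * fps_X" unfolding u_def by simp
  thus ?thesis using nr_lin[of n 1 "-c"] by simp
qed

lemma nr_invu: "0 \<le> c \<Longrightarrow> c \<le> 1 \<Longrightarrow> nr n (inverse (u c)) \<le> 1 + real n * c"
  unfolding nr_def inv_u
proof (induction n)
  case (Suc n)
  have "c ^ Suc n \<le> c" using Suc.prems by (simp add: power_le_one mult_left_le)
  thus ?case using Suc by (simp add: algebra_simps)
qed simp

lemma nr_iU: "j > 0 \<Longrightarrow> nr n (iU j) \<le> (1 + real n / real j ^ 2) ^ 2"
proof -
  assume j: "j > 0"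
  have c: "0 \<le> 1 / real j ^ 2" "1 / real j ^ 2 \<le> 1" using j by auto
  have "iU j = inverse (u (1/real j^2)) * inverse (u (1/real j^2))"
    unfolding iU_def by (simp add: fps_inverse_mult power2_eq_square)
  hence "nr n (iU j) \<le> nr n (inverse (u (1/real j^2))) * nr n (inverse (u (1/real j^2)))"
    using nr_mult by simp
  also have "\<dots> \<le> (1 + real n * (1/real j^2)) * (1 + real n * (1/real j^2))"
    using nr_invu[OF c, of n] nr_nonneg by (intro mult_mono) auto
  finally show ?thesis by (simp add: power2_eq_square)
qed

lemma sum_inv_sq_le: "(\<Sum>j=1..N. 1 / real j ^ 2) \<le> 2 - 1 / real N \<or> N = 0"
proof (induction N)
  case (Suc N)
  show ?case
  proof (cases "N = 0")
    case True thus ?thesis by simp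
  next
    case False
    hence ih: "(\<Sum>j=1..N. 1 / real j ^ 2) \<le> 2 - 1 / real N" using Suc by auto
    have N: "real N \<ge> 1" using False by simp
    have a: "real N * real (Suc N) \<le> real (Suc N)^2" by (simp add: power2_eq_square)
    have b: "1 / real (Suc N)^2 \<le> 1 / (real N * real (Suc N))"
      using a N by (intro divide_left_mono) auto
    have c: "1/(real N * real (Suc N)) = 1/real N - 1/real (Suc N)"
      using N by (simp add: field_simps)
    have "1 / real (Suc N) ^ 2 \<le> 1 / real N - 1 / real (Suc N)"
      using b c by simp
    thus ?thesis using ih by (simp add: atLeastAtMostSuc_conv del: of_nat_Suc)
  qed
qed simp

lemma sum_inv_sq_S: "finite S \<Longrightarrow> 0 \<notin> S \<Longrightarrow> (\<Sum>j\<in>S. 1 / real j ^ 2) \<le> 2"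
proof -
  assume S: "finite S" "0 \<notin> S"
  have sub: "S \<subseteq> {1..Max S}"
  proof
    fix x assume x: "x \<in> S"
    have "x \<noteq> 0" using S(2) x by metis
    moreover have "x \<le> Max S" using S x by (intro Max_ge) auto
    ultimately show "x \<in> {1..Max S}" by auto
  qed
  have "(\<Sum>j\<in>S. 1 / real j ^ 2) \<le> (\<Sum>j=1..Max S. 1 / real j ^ 2)"
    by (rule sum_mono2[OF _ sub]) auto
  also have "\<dots> \<le> 2"
  proof -
    have h: "0 \<le> 1 / real (Max S)" by simp
    show ?thesis
    proof (cases "Max S = 0")
      case True thus ?thesis by simp
    next
      case False
      hence "(\<Sum>j=1..Max S. 1 / real j ^ 2) \<le> 2 - 1 / real (Max S)"
        using sum_inv_sq_le[of "Max S"] by simp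
      thus ?thesis using h by linarith
    qed
  qed
  finally show ?thesis .
qed


lemma nr_mono: "m \<le> n \<Longrightarrow> nr m f \<le> nr n f"
  unfolding nr_def by (rule sum_mono2) auto

lemma nr_prod_iU: "finite S \<Longrightarrow> 0 \<notin> S \<Longrightarrow> nr n (\<Prod>j\<in>S. iU j) \<le> exp (4 * real n)"
proof -
  assume S: "finite S" "0 \<notin> S"
  have "nr n (\<Prod>j\<in>S. iU j) \<le> (\<Prod>j\<in>S. nr n (iU j))" by (rule nr_prod)
  also have "\<dots> \<le> (\<Prod>j\<in>S. (1 + real n / real j ^ 2) ^ 2)"
    using S by (intro prod_mono) (auto intro!: nr_iU nr_nonneg gr0I)
  also have "\<dots> = (\<Prod>j\<in>S. 1 + real n / real j ^ 2) ^ 2"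
    by (simp add: prod_power_distrib)
  also have "\<dots> \<le> exp (\<Sum>j\<in>S. real n / real j ^ 2) ^ 2"
    by (intro power_mono prod_le_exp_sum prod_nonneg) (auto intro: add_nonneg_nonneg)
  also have "(\<Sum>j\<in>S. real n / real j ^ 2) = real n * (\<Sum>j\<in>S. 1 / real j ^ 2)"
    by (simp add: sum_distrib_left)
  also have "exp (real n * (\<Sum>j\<in>S. 1 / real j ^ 2)) ^ 2 \<le> exp (real n * 2) ^ 2"
    using sum_inv_sq_S[OF S] by (intro power_mono) (auto intro: mult_left_mono)
  also have "exp (real n * 2) ^ 2 = exp (4 * real n)"
    by (simp add: exp_double[symmetric] power2_eq_square exp_add[symmetric])
  finally show ?thesis .
qed

lemma nr_VP: "nr n (VP k) \<le> exp 8"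
proof -
  have "nr n (VP k) \<le> (\<Prod>i\<in>{1..k}. nr n (u (4/real i^2)))" unfolding VP_def by (rule nr_prod)
  also have "\<dots> \<le> (\<Prod>i\<in>{1..k}. 1 + 4/real i^2)"
    by (intro prod_mono) (auto intro!: nr_nonneg order.trans[OF nr_u])
  also have "\<dots> \<le> exp (\<Sum>i\<in>{1..k}. 4/real i^2)"
    by (rule prod_le_exp_sum) auto
  also have "(\<Sum>i\<in>{1..k}. 4/real i^2) = 4 * (\<Sum>i\<in>{1..k}. 1/real i^2)"
    by (simp add: sum_distrib_left)
  also have "exp \<dots> \<le> exp 8"
    using sum_inv_sq_S[of "{1..k}"] by simp
  finally show ?thesis .
qed

definition sg :: "nat \<Rightarrow> nat \<Rightarrow> real" where
  "sg i k = pre k * real (2*i+k+2) * (\<Prod>l\<in>{1..k}. real l^4) * (\<Prod>j\<in>{i+1..i+k+1}. 1/real j^4)"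
definition sf :: "nat \<Rightarrow> nat \<Rightarrow> real" where
  "sf i k = pre k / (2*(2*real k+1)) * (\<Prod>l\<in>{1..k}. real l^4) * (\<Prod>j\<in>{i+1..i+k+1}. 1/real j^4)"

lemma Gs_norm: "Gs i k = fps_const (sg i k) * (VP k * (\<Prod>j\<in>{i+1..i+k+1}. iU j))"
proof -
  have "(\<Prod>j\<in>{i+1..i+k+1}. iQ j) = fps_const (\<Prod>j\<in>{i+1..i+k+1}. 1/real j^4) * (\<Prod>j\<in>{i+1..i+k+1}. iU j)"
    by (rule prod_iQ) simp
  thus ?thesis unfolding Gs_def CP_VP sg_def
    by (simp add: fps_of_nat[symmetric] ac_simps del: of_nat_add of_nat_mult)
qed

lemma Fs_norm: "Fs i k = fps_const (sf i k) * (VP k * (Lam k (i+k+2) * (\<Prod>j\<in>{i+1..i+k+1}. iU j)))"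
proof -
  have "(\<Prod>j\<in>{i+1..i+k+1}. iQ j) = fps_const (\<Prod>j\<in>{i+1..i+k+1}. 1/real j^4) * (\<Prod>j\<in>{i+1..i+k+1}. iU j)"
    by (rule prod_iQ) simp
  thus ?thesis unfolding Fs_def CP_VP sf_def
    by (simp add: ac_simps)
qed

lemma prodD: "real (fact (Suc k)) * (real i + 1) \<le> (\<Prod>j\<in>{i+1..i+k+1}. real j)"
proof (induction k)
  case 0 thus ?case by simp
next
  case (Suc k)
  have "(\<Prod>j\<in>{i+1..i+Suc k+1}. real j) = (\<Prod>j\<in>{i+1..i+k+1}. real j) * real (i+k+2)"
    by (simp add: prod.cl_ivl_Suc)
  moreover have "real (fact (Suc (Suc k))) * (real i + 1) = real (fact (Suc k)) * (real i + 1) * real (k+2)"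
    by (simp add: algebra_simps)
  moreover have "real (fact (Suc k)) * (real i + 1) * real (k+2) \<le> (\<Prod>j\<in>{i+1..i+k+1}. real j) * real (i+k+2)"
    using Suc by (intro mult_mono) (auto intro!: mult_nonneg_nonneg prod_nonneg)
  ultimately show ?case by linarith
qed

lemma ratio_bound: "(\<Prod>l\<in>{1..k}. real l^4) * (\<Prod>j\<in>{i+1..i+k+1}. 1/real j^4)
   \<le> 1 / ((real i + 1)^4 * (real k + 1)^4)"
proof -
  define D where "D = (\<Prod>j\<in>{i+1..i+k+1}. real j)"
  have fk: "(\<Prod>l\<in>{1..k}. real l) = fact k" by (simp add: fact_prod)
  have Dge: "fact k * (real k + 1) * (real i + 1) \<le> D"
    using prodD[of k i] unfolding D_def by (simp add: algebra_simps)
  have fpos: "(fact k :: real) > 0" by simp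
  have pos: "0 < fact k * (real k + 1) * (real i + 1)" using fpos by simp
  have a: "(\<Prod>l\<in>{1..k}. real l^4) = fact k ^ 4"
    by (simp only: prod_power_distrib[symmetric] fk)
  have b: "(\<Prod>j\<in>{i+1..i+k+1}. 1/real j^4) = 1 / D^4"
    unfolding D_def by (simp only: prod_dividef prod.neutral_const prod_power_distrib[symmetric])
  have eq: "(\<Prod>l\<in>{1..k}. real l^4) * (\<Prod>j\<in>{i+1..i+k+1}. 1/real j^4) = fact k ^ 4 / D ^ 4"
    unfolding a b by simp
  have Dp: "D > 0" using Dge pos by linarith
  have "fact k ^ 4 / D ^ 4 \<le> fact k ^ 4 / (fact k * (real k + 1) * (real i + 1)) ^ 4"
    using Dge pos Dp by (intro divide_left_mono power_mono mult_pos_pos) auto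
  moreover have "fact k ^ 4 / (fact k * (real k + 1) * (real i + 1)) ^ 4 = 1 / ((real i + 1)^4 * (real k + 1)^4)"
  proof -
    have e: "(fact k * (real k + 1) * (real i + 1)) ^ 4 = fact k ^ 4 * ((real i + 1)^4 * (real k + 1)^4)"
      by (simp add: power_mult_distrib)
    have "(fact k::real) ^ 4 \<noteq> 0" using fpos by simp
    thus ?thesis unfolding e by simp
  qed
  ultimately show ?thesis using eq by linarith
qed

lemma pre_abs: "\<bar>pre k\<bar> \<le> 1/2"
proof -
  have h: "0 < (2*k choose k)" by (rule zero_less_binomial) simp
  have "1 \<le> (2*k choose k)" using h by linarith
  hence "real (2*k choose k) \<ge> 1" by simp
  thus ?thesis unfolding pre_def by (simp add: abs_div field_simps)
qed

lemma sg_bound: "\<bar>sg i k\<bar> \<le> 1 / ((real i + 1)^3 * (real k + 1)^3)"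
proof -
  define R where "R = (\<Prod>l\<in>{1..k}. real l^4) * (\<Prod>j\<in>{i+1..i+k+1}. 1/real j^4)"
  have R0: "R \<ge> 0" unfolding R_def by (intro mult_nonneg_nonneg prod_nonneg) auto
  have Rb: "R \<le> 1 / ((real i + 1)^4 * (real k + 1)^4)" unfolding R_def by (rule ratio_bound)
  have m: "real (2*i+k+2) \<le> 2 * (real i + 1) * (real k + 1)" by (simp add: algebra_simps)
  have "sg i k = pre k * real (2*i+k+2) * R"
    unfolding sg_def R_def by (simp only: mult.assoc)
  hence "\<bar>sg i k\<bar> = \<bar>pre k\<bar> * real (2*i+k+2) * R"
    using R0 by (simp add: abs_mult)
  also have "\<dots> \<le> (1/2) * (2 * (real i + 1) * (real k + 1)) * (1 / ((real i + 1)^4 * (real k + 1)^4))"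
    using pre_abs m Rb R0 by (intro mult_mono) auto
  also have "\<dots> = 1 / ((real i + 1)^3 * (real k + 1)^3)"
  proof -
    have aux: "\<And>a b::real. a > 0 \<Longrightarrow> b > 0 \<Longrightarrow> (1/2) * (2*a*b) * (1/(a^4*b^4)) = 1/(a^3*b^3)"
      by (simp add: field_simps eval_nat_numeral)
    show ?thesis by (rule aux) auto
  qed
  finally show ?thesis .
qed

lemma sf_bound: "\<bar>sf i k\<bar> \<le> 1 / (real i + 1)^4"
proof -
  define R where "R = (\<Prod>l\<in>{1..k}. real l^4) * (\<Prod>j\<in>{i+1..i+k+1}. 1/real j^4)"
  have R0: "R \<ge> 0" unfolding R_def by (intro mult_nonneg_nonneg prod_nonneg) auto
  have Rb: "R \<le> 1 / ((real i + 1)^4 * (real k + 1)^4)" unfolding R_def by (rule ratio_bound)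
  also have "\<dots> \<le> 1 / (real i + 1)^4"
    by (intro divide_left_mono) (auto simp: mult_le_cancel_left1 one_le_power)
  finally have Rb': "R \<le> 1 / (real i + 1)^4" .
  have d: "2*(2*real k+1) \<ge> 1" by simp
  have "\<bar>pre k / (2*(2*real k+1))\<bar> = \<bar>pre k\<bar> / (2*(2*real k+1))"
    by (simp add: abs_div)
  also have "\<dots> \<le> \<bar>pre k\<bar> / 1"
    using d by (intro divide_left_mono) auto
  finally have "\<bar>pre k / (2*(2*real k+1))\<bar> \<le> \<bar>pre k\<bar>" by simp
  hence q: "\<bar>pre k / (2*(2*real k+1))\<bar> \<le> 1" using pre_abs[of k] by linarith
  have "sf i k = pre k / (2*(2*real k+1)) * R"
    unfolding sf_def R_def by (simp only: mult.assoc)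
  hence "\<bar>sf i k\<bar> = \<bar>pre k / (2*(2*real k+1))\<bar> * R"
    using R0 by (simp add: abs_mult)
  also have "\<dots> \<le> 1 * (1 / (real i + 1)^4)"
    using q Rb' R0 by (intro mult_mono) auto
  finally show ?thesis by simp
qed


definition MM :: "nat \<Rightarrow> real" where "MM n = exp 8 * exp (4 * real n)"

lemma MM_nonneg: "MM n \<ge> 0" unfolding MM_def by simp

lemma nth_const_mult_bound:
  "\<bar>fps_nth (fps_const c * f) n\<bar> \<le> \<bar>c\<bar> * nr n f"
  using nth_le_nr[of f n] by (simp add: abs_mult mult_left_mono)

lemma Gs_coef_bound: "\<bar>fps_nth (Gs i k) n\<bar> \<le> MM n / ((real i + 1)^3 * (real k + 1)^3)"
proof -
  have "\<bar>fps_nth (Gs i k) n\<bar> \<le> \<bar>sg i k\<bar> * nr n (VP k * (\<Prod>j\<in>{i+1..i+k+1}. iU j))"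
    unfolding Gs_norm by (rule nth_const_mult_bound)
  also have "\<dots> \<le> \<bar>sg i k\<bar> * (exp 8 * exp (4 * real n))"
  proof (intro mult_left_mono)
    have "nr n (VP k * (\<Prod>j\<in>{i+1..i+k+1}. iU j)) \<le> nr n (VP k) * nr n (\<Prod>j\<in>{i+1..i+k+1}. iU j)"
      by (rule nr_mult)
    also have "\<dots> \<le> exp 8 * exp (4 * real n)"
      using nr_VP nr_prod_iU[of "{i+1..i+k+1}" n] nr_nonneg by (intro mult_mono) auto
    finally show "nr n (VP k * (\<Prod>j\<in>{i+1..i+k+1}. iU j)) \<le> exp 8 * exp (4 * real n)" .
  qed simp
  also have "\<dots> \<le> 1 / ((real i + 1)^3 * (real k + 1)^3) * MM n"
    unfolding MM_def using sg_bound by (intro mult_right_mono) auto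
  finally show ?thesis by simp
qed

lemma Lam_lin: "Lam k m = fps_const (2*real m^2 - 6*real (k+1)*real m + 5*real (k+1)^2) + fps_const (-2) * fps_X"
  unfolding Lam_def by (simp add: fps_of_nat[symmetric] numeral_fps_const algebra_simps)

lemma Fs_coef_bound: "\<bar>fps_nth (Fs i k) n\<bar> \<le> MM n * (15 * (real k + 2)^2) / (real i + 1)^2"
proof -
  define m where "m = i+k+2"
  define L0 where "L0 = 2*real m^2 - 6*real (k+1)*real m + 5*real (k+1)^2"
  have m1: "real k + 1 \<le> real m" "1 \<le> real m" unfolding m_def by auto
  have mle: "real m \<le> (real k + 2) * (real i + 1)" unfolding m_def by (simp add: algebra_simps)
  have "\<bar>L0\<bar> + 2 \<le> 2*real m^2 + 6*(real k+1)*real m + 5*(real k+1)^2 + 2"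
    unfolding L0_def by (simp add: abs_le_iff) (simp add: algebra_simps)
  also have "\<dots> \<le> 15 * real m ^ 2"
  proof -
    have "(real k+1)*real m \<le> real m * real m" using m1 by (intro mult_right_mono) auto
    hence h1: "6*(real k+1)*real m \<le> 6*real m^2"
      unfolding power2_eq_square by (simp only: mult.assoc mult_le_cancel_left) simp
    have "(real k+1)^2 \<le> real m^2" using m1 by (intro power_mono) auto
    hence h2: "5*(real k+1)^2 \<le> 5*real m^2" by simp
    have h3: "1 \<le> real m^2" using m1 by simp
    show ?thesis using h1 h2 h3 by linarith
  qed
  also have "\<dots> \<le> 15 * ((real k + 2)^2 * (real i + 1)^2)"
    using mle by (simp add: power_mult_distrib[symmetric] power_mono)
  finally have Lb: "\<bar>L0\<bar> + 2 \<le> 15 * ((real k + 2)^2 * (real i + 1)^2)" .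
  have nL: "nr n (Lam k m) \<le> \<bar>L0\<bar> + 2"
    unfolding Lam_lin L0_def using nr_lin by (metis abs_neg_numeral abs_numeral)
  have "\<bar>fps_nth (Fs i k) n\<bar> \<le> \<bar>sf i k\<bar> * nr n (VP k * (Lam k m * (\<Prod>j\<in>{i+1..i+k+1}. iU j)))"
    unfolding Fs_norm m_def by (rule nth_const_mult_bound)
  also have "\<dots> \<le> \<bar>sf i k\<bar> * (exp 8 * ((\<bar>L0\<bar> + 2) * exp (4 * real n)))"
  proof (intro mult_left_mono)
    have "nr n (VP k * (Lam k m * (\<Prod>j\<in>{i+1..i+k+1}. iU j)))
        \<le> nr n (VP k) * (nr n (Lam k m) * nr n (\<Prod>j\<in>{i+1..i+k+1}. iU j))"
      using nr_mult[of n "VP k"] nr_mult[of n "Lam k m"] nr_nonneg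
      by (meson mult_left_mono order.trans)
    also have "\<dots> \<le> exp 8 * ((\<bar>L0\<bar> + 2) * exp (4 * real n))"
      using nr_VP nr_prod_iU[of "{i+1..i+k+1}" n] nr_nonneg nL
      by (intro mult_mono) auto
    finally show "nr n (VP k * (Lam k m * (\<Prod>j\<in>{i+1..i+k+1}. iU j))) \<le> exp 8 * ((\<bar>L0\<bar> + 2) * exp (4 * real n))" .
  qed simp
  also have "\<dots> \<le> 1 / (real i + 1)^4 * (exp 8 * (15 * ((real k + 2)^2 * (real i + 1)^2) * exp (4 * real n)))"
    using sf_bound Lb by (intro mult_mono) auto
  also have "\<dots> = MM n * (15 * (real k + 2)^2) / (real i + 1)^2"
  proof -
    define a where "a = real i + 1"
    have a: "a > 0" unfolding a_def by simp
    show ?thesis unfolding MM_def a_def[symmetric] using a by (simp add: field_simps eval_nat_numeral)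
  qed
  finally show ?thesis .
qed




section \<open>Series manipulations\<close>

lemma summable_cube: "summable (\<lambda>i. 1 / (real i + 1)^3)"
proof -
  have "summable (\<lambda>i. inverse (real i ^ 3))" by (rule inverse_power_summable) simp
  hence "summable (\<lambda>i. inverse (real (Suc i) ^ 3))" by (subst summable_Suc_iff)
  thus ?thesis by (simp add: divide_inverse add.commute)
qed

lemma inv_Suc_lim: "(\<lambda>i. 1 / (real i + 1)^2) \<longlonglongrightarrow> 0"
proof (rule Lim_null_comparison)
  show "\<forall>\<^sub>F i in sequentially. norm (1 / (real i + 1)^2) \<le> inverse (real (Suc i))"
  proof (intro always_eventually allI)
    fix i :: nat
    have a: "1 \<le> real i + 1" by simp
    hence "real i + 1 \<le> (real i + 1)^2" by (simp add: power2_eq_square)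
    hence "1 / (real i + 1)^2 \<le> 1 / (real i + 1)"
      using a by (intro divide_left_mono) auto
    moreover have "inverse (real (Suc i)) = 1 / (real i + 1)"
      by (simp add: divide_inverse add.commute)
    ultimately show "norm (1 / (real i + 1)^2) \<le> inverse (real (Suc i))" by simp
  qed
  show "(\<lambda>i. inverse (real (Suc i))) \<longlonglongrightarrow> 0" by (rule LIMSEQ_inverse_real_of_nat)
qed

definition gg :: "nat \<Rightarrow> nat \<Rightarrow> nat \<Rightarrow> real" where "gg n i k = fps_nth (Gs i k) n"
definition ff :: "nat \<Rightarrow> nat \<Rightarrow> nat \<Rightarrow> real" where "ff n i k = fps_nth (Fs i k) n"
definition TT :: "nat \<Rightarrow> nat \<Rightarrow> real" where "TT n k = (\<Sum>i. gg n i k)"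

lemma gg_bound: "\<bar>gg n i k\<bar> \<le> MM n / (real k + 1)^3 * (1 / (real i + 1)^3)"
  using Gs_coef_bound[of i k n] unfolding gg_def by (simp add: field_simps)

lemma gg_summable: "summable (\<lambda>i. gg n i k)"
proof (rule summable_comparison_test')
  show "summable (\<lambda>i. MM n / (real k + 1)^3 * (1 / (real i + 1)^3))"
    by (rule summable_mult[OF summable_cube])
  show "norm (gg n i k) \<le> MM n / (real k + 1)^3 * (1 / (real i + 1)^3)" for i
    unfolding real_norm_def by (rule gg_bound)
qed

lemma ff_lim: "(\<lambda>i. ff n i k) \<longlonglongrightarrow> 0"
proof (rule Lim_null_comparison)
  show "\<forall>\<^sub>F i in sequentially. norm (ff n i k) \<le> MM n * (15 * (real k + 2)^2) * (1 / (real i + 1)^2)"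
    using Fs_coef_bound unfolding ff_def by (intro always_eventually allI) (simp add: field_simps)
  show "(\<lambda>i. MM n * (15 * (real k + 2)^2) * (1 / (real i + 1)^2)) \<longlonglongrightarrow> 0"
    by (rule tendsto_mult_right_zero[OF inv_Suc_lim])
qed

lemma WZc: "gg n (Suc i) k - gg n i (Suc k) = ff n i k - ff n (Suc i) k"
  unfolding gg_def ff_def using arg_cong[OF WZ[of i k], of "\<lambda>f. fps_nth f n"] by simp

lemma TT_step: "TT n k = (gg n 0 k + ff n 0 k) + TT n (Suc k)"
proof -
  have s1: "(\<lambda>i. gg n i (Suc k)) sums TT n (Suc k)"
    unfolding TT_def by (rule summable_sums[OF gg_summable])
  have s2: "(\<lambda>i. ff n i k - ff n (Suc i) k) sums (ff n 0 k - 0)"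
    by (rule telescope_sums'[OF ff_lim])
  have "(\<lambda>i. gg n i (Suc k) + (ff n i k - ff n (Suc i) k)) sums (TT n (Suc k) + (ff n 0 k - 0))"
    by (rule sums_add[OF s1 s2])
  moreover have "(\<lambda>i. gg n i (Suc k) + (ff n i k - ff n (Suc i) k)) = (\<lambda>i. gg n (Suc i) k)"
    using WZc by (auto simp: algebra_simps)
  ultimately have "(\<Sum>i. gg n (Suc i) k) = TT n (Suc k) + ff n 0 k"
    by (simp add: sums_iff)
  moreover have "(\<Sum>i. gg n (Suc i) k) = TT n k - gg n 0 k"
    unfolding TT_def by (rule suminf_split_head[OF gg_summable])
  ultimately show ?thesis by simp
qed

lemma TT_lim: "TT n \<longlonglongrightarrow> 0"
proof (rule Lim_null_comparison)
  define S where "S = (\<Sum>i. 1 / (real i + 1)^3)"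
  show "\<forall>\<^sub>F k in sequentially. norm (TT n k) \<le> MM n * S * inverse (real (Suc k))"
  proof (intro always_eventually allI)
    fix k
    have "norm (TT n k) \<le> (\<Sum>i. MM n / (real k + 1)^3 * (1 / (real i + 1)^3))"
      unfolding TT_def
    proof (rule norm_suminf_le)
      show "norm (gg n i k) \<le> MM n / (real k + 1)^3 * (1 / (real i + 1)^3)" for i
        unfolding real_norm_def by (rule gg_bound)
      show "summable (\<lambda>i. MM n / (real k + 1)^3 * (1 / (real i + 1)^3))"
        by (rule summable_mult[OF summable_cube])
    qed
    also have "\<dots> = MM n / (real k + 1)^3 * S"
      unfolding S_def by (rule suminf_mult[OF summable_cube])
    also have "\<dots> \<le> MM n * S * inverse (real (Suc k))"
    proof -
      have S0: "S \<ge> 0" unfolding S_def by (rule suminf_nonneg[OF summable_cube]) simp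
      have a: "1 \<le> real k + 1" by simp
      hence "real k + 1 \<le> (real k + 1)^3"
        by (metis power_one_right power_increasing one_le_numeral)
      hence "1 / (real k + 1)^3 \<le> 1 / (real k + 1)"
        using a by (intro divide_left_mono) auto
      hence "1 / (real k + 1)^3 \<le> inverse (real k + 1)" by (simp add: divide_inverse)
      hence "MM n * S * (1 / (real k + 1)^3) \<le> MM n * S * inverse (real k + 1)"
        using S0 MM_nonneg by (intro mult_left_mono) auto
      thus ?thesis by (simp add: field_simps add.commute)
    qed
    finally show "norm (TT n k) \<le> MM n * S * inverse (real (Suc k))" .
  qed
  show "(\<lambda>k. MM n * S * inverse (real (Suc k))) \<longlonglongrightarrow> 0"
    by (rule tendsto_mult_right_zero[OF LIMSEQ_inverse_real_of_nat])
qed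

lemma diag_sums: "(\<lambda>k. gg n 0 k + ff n 0 k) sums TT n 0"
proof -
  have p: "TT n 0 = (\<Sum>k<N. gg n 0 k + ff n 0 k) + TT n N" for N
  proof (induction N)
    case 0 show ?case by simp
  next
    case (Suc N)
    have "TT n N = (gg n 0 N + ff n 0 N) + TT n (Suc N)" by (rule TT_step)
    with Suc.IH show ?case by simp
  qed
  have "(\<lambda>N. TT n 0 - TT n N) \<longlonglongrightarrow> TT n 0 - 0"
    by (intro tendsto_diff tendsto_const TT_lim)
  moreover have "(\<lambda>N. TT n 0 - TT n N) = (\<lambda>N. \<Sum>k<N. gg n 0 k + ff n 0 k)"
    using p by (auto simp: algebra_simps)
  ultimately show ?thesis unfolding sums_def by simp
qed


lemma summable_pow_Suc: "m \<ge> 2 \<Longrightarrow> summable (\<lambda>i. 1 / real (Suc i) ^ m)"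
proof -
  assume m: "m \<ge> 2"
  have "summable (\<lambda>i. inverse (real i ^ m))" by (rule inverse_power_summable[OF m])
  hence "summable (\<lambda>i. inverse (real (Suc i) ^ m))" by (subst summable_Suc_iff)
  thus ?thesis by (simp add: divide_inverse)
qed

lemma gg0: "gg n i 0 = real (n+1) * (1 / real (Suc i) ^ (2*n+3))"
proof -
  have sg0: "sg i 0 = 1 / real (Suc i) ^ 3"
  proof -
    define a where "a = real (Suc i)"
    have a: "a > 0" unfolding a_def by simp
    have "sg i 0 = (1/2) * (2 * a) * (1 / a^4)"
      unfolding sg_def pre_def a_def by (simp add: algebra_simps)
    also have "\<dots> = 1 / a^3" using a by (simp add: field_simps eval_nat_numeral)
    finally show ?thesis unfolding a_def .
  qed
  have "Gs i 0 = fps_const (sg i 0) * iU (Suc i)"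
    unfolding Gs_norm VP_def by simp
  hence "gg n i 0 = sg i 0 * (real (n+1) * (1 / real (Suc i) ^ 2) ^ n)"
    unfolding gg_def iU_def by (simp add: inv_u2_nth del: of_nat_Suc)
  also have "\<dots> = real (n+1) * (1 / real (Suc i) ^ (2*n+3))"
    unfolding sg0 by (simp add: power_mult power_add field_simps power_mult_distrib[symmetric]
        power_commutes del: of_nat_Suc) (metis power_mult mult.commute)
  finally show ?thesis .
qed

lemma TT0: "TT n 0 = real (n+1) * zeta_nat (2*n+3)"
  unfolding TT_def gg0 zeta_nat_def
  by (rule suminf_mult[OF summable_pow_Suc]) simp

definition tj :: "nat \<Rightarrow> nat \<Rightarrow> nat \<Rightarrow> real" where
  "tj n j k = (-1) ^ (Suc k - 1) / (real (Suc k) ^ (2*j+3) * real (2 * Suc k choose Suc k)) *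
         (\<Sum>r=0..n-j. (-4) ^ r * e_coeff 2 (Suc k) r * g_coeff 2 (Suc k) (n - j - r))"

lemma inner_eq: "(\<Sum>r=0..m. (-4) ^ r * e_coeff 2 (Suc k) r * g_coeff 2 (Suc k) (m - r))
    = fps_nth (EP k * GP k) m"
  unfolding fps_mult_nth EP_def GP_def e_coeff_def g_coeff_def
  by (simp add: fps_nth_compose_linear)

lemma term_eq: "(\<Sum>j=0..n. (3 * real j + 5) * tj n j k) = c0 k * fps_nth (WK k * (EP k * GP k)) n"
proof -
  have "(\<Sum>j=0..n. (3 * real j + 5) * tj n j k)
      = (\<Sum>j=0..n. c0 k * (fps_nth (WK k) j * fps_nth (EP k * GP k) (n - j)))"
  proof (intro sum.cong refl)
    fix j assume "j \<in> {0..n}"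
    show "(3 * real j + 5) * tj n j k = c0 k * (fps_nth (WK k) j * fps_nth (EP k * GP k) (n - j))"
      unfolding tj_def inner_eq[symmetric] WK_def c0_def
      by (simp add: power_add field_simps del: of_nat_Suc binomial_Suc_Suc)
  qed
  also have "\<dots> = c0 k * fps_nth (WK k * (EP k * GP k)) n"
    unfolding fps_mult_nth[of "WK k"] by (simp add: sum_distrib_left)
  finally show ?thesis .
qed

lemma dk_eq: "gg n 0 k + ff n 0 k = (\<Sum>j=0..n. (3 * real j + 5) * tj n j k) / 2"
  unfolding term_eq gg_def ff_def
  using arg_cong[OF diag_link[of k], of "\<lambda>f. fps_nth f n"] by simp

lemma EPGP_bound: "\<bar>fps_nth (EP k * GP k) m\<bar> \<le> MM m"
proof -
  have "\<bar>fps_nth (EP k * GP k) m\<bar> \<le> nr m (EP k * GP k)" by (rule nth_le_nr)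
  also have "\<dots> \<le> nr m (VP k) * nr m (\<Prod>j\<in>{1..k}. iU j)"
    unfolding EP_VP GP_iU by (rule nr_mult)
  also have "\<dots> \<le> exp 8 * exp (4 * real m)"
    using nr_VP nr_prod_iU[of "{1..k}" m] nr_nonneg by (intro mult_mono) auto
  finally show ?thesis unfolding MM_def .
qed

lemma tj_summable: "summable (tj n j)"
proof (rule summable_comparison_test')
  show "summable (\<lambda>k. MM n * (1 / (real k + 1)^3))"
    by (rule summable_mult[OF summable_cube])
  fix k
  have b1: "real (2 * Suc k choose Suc k) \<ge> 1"
  proof -
    have "0 < (2 * Suc k choose Suc k)" by (rule zero_less_binomial) simp
    hence "1 \<le> (2 * Suc k choose Suc k)" by linarith
    thus ?thesis by simp
  qed
  have b2: "real (Suc k) ^ 3 \<le> real (Suc k) ^ (2*j+3)"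
    by (rule power_increasing) auto
  have pos: "0 < real (Suc k) ^ 3" by simp
  have "\<bar>tj n j k\<bar> = 1 / (real (Suc k) ^ (2*j+3) * real (2 * Suc k choose Suc k))
        * \<bar>fps_nth (EP k * GP k) (n - j)\<bar>"
    unfolding tj_def inner_eq by (simp add: abs_mult abs_div del: of_nat_Suc binomial_Suc_Suc)
  also have "\<dots> \<le> 1 / (real k + 1)^3 * MM n"
  proof (intro mult_mono)
    have "real (Suc k) ^ 3 * 1 \<le> real (Suc k) ^ (2*j+3) * real (2 * Suc k choose Suc k)"
      using b1 b2 pos by (intro mult_mono) auto
    hence "1 / (real (Suc k) ^ (2*j+3) * real (2 * Suc k choose Suc k)) \<le> 1 / (real (Suc k) ^ 3)"
      by (intro frac_le[OF _ order.refl pos]) auto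
    thus "1 / (real (Suc k) ^ (2*j+3) * real (2 * Suc k choose Suc k)) \<le> 1 / (real k + 1)^3"
      by (simp add: add.commute)
    show "\<bar>fps_nth (EP k * GP k) (n - j)\<bar> \<le> MM n"
      using EPGP_bound[of k "n-j"] unfolding MM_def by (smt (verit) diff_le_self exp_le_cancel_iff
          mult_left_mono of_nat_le_iff exp_ge_zero)
  qed auto
  finally show "norm (tj n j k) \<le> MM n * (1 / (real k + 1)^3)" by (simp add: mult.commute)
qed


theorem corollary3:
  fixes n :: nat
  shows "zeta_nat (2*n+3) =
    1 / (2 * real n + 2) *
    (\<Sum>j=0..n. (3 * real j + 5) *
      (\<Sum>k. let k' = Suc k in
         (-1) ^ (k' - 1) / (real k' ^ (2*j+3) * real (2*k' choose k')) *
         (\<Sum>r=0..n-j. (-4) ^ r * e_coeff 2 k' r * g_coeff 2 k' (n - j - r))))"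
proof -
  have L: "(\<lambda>k. let k' = Suc k in
         (-1) ^ (k' - 1) / (real k' ^ (2*j+3) * real (2*k' choose k')) *
         (\<Sum>r=0..n-j. (-4) ^ r * e_coeff 2 k' r * g_coeff 2 k' (n - j - r))) = tj n j" for j
    by (simp add: fun_eq_iff tj_def Let_def)
  have "(\<Sum>j=0..n. (3 * real j + 5) * suminf (tj n j)) = (\<Sum>j=0..n. \<Sum>k. (3 * real j + 5) * tj n j k)"
    by (intro sum.cong refl) (simp add: suminf_mult[OF tj_summable])
  also have "\<dots> = (\<Sum>k. \<Sum>j=0..n. (3 * real j + 5) * tj n j k)"
    by (rule suminf_sum[symmetric]) (intro summable_mult tj_summable)
  also have "\<dots> = (\<Sum>k. 2 * (gg n 0 k + ff n 0 k))"
    by (simp add: dk_eq)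
  also have "\<dots> = 2 * TT n 0"
    using sums_unique[OF sums_mult[OF diag_sums, of 2]] by simp
  also have "\<dots> = (2 * real n + 2) * zeta_nat (2*n+3)"
    unfolding TT0 by (simp add: algebra_simps)
  finally have E: "(\<Sum>j=0..n. (3 * real j + 5) * suminf (tj n j)) = (2 * real n + 2) * zeta_nat (2*n+3)" .
  have ne: "2 * real n + 2 \<noteq> 0" by simp
  show ?thesis unfolding L E using ne by simp
qed

end
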